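(* Let $N\ge 2$ and $\beta\in\{2,4\}$. (Complex case, $\beta=2$.) Let $R=[\rho_{jk}]$ range over $N\times N$ complex correlation matrices (Hermitian positive definite with all diagonal entries equal to $1$), with Cholesky factorisation $R=LL^*$, $L=[l_{jk}]$ lower triangular with $l_{jj}>0$. Parametrise $L$ by angles $\theta_{jp}\in(0,\pi)$, $2\le j\le N$, $1\le p\le 2j-2$, via $$l_{jk}=\left(\cos\theta_{j,2k-1}+i\cos\theta_{j,2k}\sin\theta_{j,2k-1}\right)\prod_{p=1}^{2k-2}\sin\theta_{jp}\ \ (1\le k\le j-1),\qquad l_{jj}=\prod_{p=1}^{2j-2}\sin\theta_{jp},$$ and $l_{11}=1$. Then the absolute value of the Jacobian determinant of the map from the angles $\{\theta_{jp}\}$ to the real coordinates $\{\mathrm{Re}\,\rho_{jk},\mathrm{Im}\,\rho_{jk}\}_{1\le k<j\le N}$ is $$\prod_{j=2}^{N}\prod_{p=1}^{2j-2}\left(\sin\theta_{jp}\right)^{2N-p-1}.$$ (Quaternion case, $\beta=4$.) Let $R$ range over $N\times N$ quaternion correlation matrices: $2N\times 2N$ complex Hermitian positive definite matrices composed of $2\times2$ blocks of the form $\begin{bmatrix}z&w\\-\bar w&\bar z\end{bmatrix}$, with all diagonal blocks equal to the $2\times 2$ identity. Write $R=LL^*$ with $L$ block lower triangular of the same block form, whose diagonal blocks are positive multiples $l_{jj}I_2$ of the identity. For an off-diagonal block $l_{jk}$ with parameters $(z,w)$ write $l_{jk}^{(1)}=\mathrm{Re}\,z$, $l_{jk}^{(2)}=\mathrm{Im}\,z$,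 $l_{jk}^{(3)}=\mathrm{Re}\,w$, $l_{jk}^{(4)}=\mathrm{Im}\,w$. Parametrise by angles $\theta_{jp}\in(0,\pi)$, $2\le j\le N$, $1\le p\le 4j-4$, via $$l_{jk}^{(s)}=\cos\theta_{j,4(k-1)+s}\left(\prod_{m=1}^{s-1}\sin\theta_{j,4(k-1)+m}\right)\prod_{p=1}^{4(k-1)}\sin\theta_{jp}\ \ (1\le k\le j-1,\ 1\le s\le 4),\qquad l_{jj}=\prod_{p=1}^{4(j-1)}\sin\theta_{jp},$$ and $l_{11}=1$. Then the absolute value of the Jacobian determinant of the map from the angles $\{\theta_{jp}\}$ to the four real coordinates of each block $\rho_{jk}$, $1\le k<j\le N$, of $R$ is $$\prod_{j=2}^{N}\prod_{p=1}^{4j-4}\left(\sin\theta_{jp}\right)^{4N-p-3}.$$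
   Context: Empty products equal $1$. $L^*$ denotes the conjugate transpose. The hyperspherical parametrisations above are bijections from the open cube of angles onto the set of possible Cholesky factors of correlation matrices (each row of $L$ being a unit vector of real coordinates with positive last coordinate $l_{jj}$). *)

theory Defs
  imports Complex_Main "Jordan_Normal_Form.Determinant"
begin

definition partial_deriv :: "(('i \<Rightarrow> real) \<Rightarrow> real) \<Rightarrow> ('i \<Rightarrow> real) \<Rightarrow> 'i \<Rightarrow> real" where
  "partial_deriv f x i = (THE D. ((\<lambda>t. f (x(i := t))) has_real_derivative D) (at (x i)))"

definition jacobian_det ::
  "'i list \<Rightarrow> 'o list \<Rightarrow> (('i \<Rightarrow> real) \<Rightarrow> 'o \<Rightarrow> real) \<Rightarrow> ('i \<Rightarrow> real) \<Rightarrow> real" where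
  "jacobian_det ins outs F x =
     det (mat (length outs) (length ins)
          (\<lambda>(a, b). partial_deriv (\<lambda>y. F y (outs ! a)) x (ins ! b)))"

definition angles2 :: "nat \<Rightarrow> (nat \<times> nat) list" where
  "angles2 N = [(j, p). j \<leftarrow> [2..<Suc N], p \<leftarrow> [1..<2*j-1]]"

text \<open>Output coordinates (j,k,1) = Re rho_jk, (j,k,2) = Im rho_jk, 1 \<le> k < j \<le> N.\<close>
definition coords2 :: "nat \<Rightarrow> (nat \<times> nat \<times> nat) list" where
  "coords2 N = [(j, k, c). j \<leftarrow> [2..<Suc N], k \<leftarrow> [1..<j], c \<leftarrow> [1, 2]]"

text \<open>Cholesky factor L (1-indexed entries l_jk).\<close>
definition L2 :: "(nat \<times> nat \<Rightarrow> real) \<Rightarrow> nat \<Rightarrow> nat \<Rightarrow> complex" where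
  "L2 \<theta> j k =
     (if j = 1 \<and> k = 1 then 1
      else if k = j then complex_of_real (\<Prod>p\<in>{1..2*j-2}. sin (\<theta> (j, p)))
      else if 1 \<le> k \<and> k < j then
        (complex_of_real (cos (\<theta> (j, 2*k-1)))
          + \<i> * complex_of_real (cos (\<theta> (j, 2*k)) * sin (\<theta> (j, 2*k-1))))
        * complex_of_real (\<Prod>p\<in>{1..2*k-2}. sin (\<theta> (j, p)))
      else 0)"

definition R2 :: "nat \<Rightarrow> (nat \<times> nat \<Rightarrow> real) \<Rightarrow> nat \<Rightarrow> nat \<Rightarrow> complex" where
  "R2 N \<theta> j k = (\<Sum>m\<in>{1..N}. L2 \<theta> j m * cnj (L2 \<theta> k m))"

definition map2 :: "nat \<Rightarrow> (nat \<times> nat \<Rightarrow> real) \<Rightarrow> nat \<times> nat \<times> nat \<Rightarrow> real" where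
  "map2 N \<theta> = (\<lambda>(j, k, c). if c = 1 then Re (R2 N \<theta> j k) else Im (R2 N \<theta> j k))"

definition angles4 :: "nat \<Rightarrow> (nat \<times> nat) list" where
  "angles4 N = [(j, p). j \<leftarrow> [2..<Suc N], p \<leftarrow> [1..<4*j-3]]"

text \<open>Output coordinates (j,k,s), s = 1..4: Re z, Im z, Re w, Im w of block rho_jk.\<close>
definition coords4 :: "nat \<Rightarrow> (nat \<times> nat \<times> nat) list" where
  "coords4 N = [(j, k, s). j \<leftarrow> [2..<Suc N], k \<leftarrow> [1..<j], s \<leftarrow> [1..<5]]"

definition lq :: "(nat \<times> nat \<Rightarrow> real) \<Rightarrow> nat \<Rightarrow> nat \<Rightarrow> nat \<Rightarrow> real" where
  "lq \<theta> j k s = cos (\<theta> (j, 4*(k-1)+s))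
      * (\<Prod>m\<in>{1..s-1}. sin (\<theta> (j, 4*(k-1)+m)))
      * (\<Prod>p\<in>{1..4*(k-1)}. sin (\<theta> (j, p)))"

text \<open>Block parameters (z,w) of block (j,k) of L (1-indexed blocks).\<close>
definition Lblock4 :: "(nat \<times> nat \<Rightarrow> real) \<Rightarrow> nat \<Rightarrow> nat \<Rightarrow> complex \<times> complex" where
  "Lblock4 \<theta> j k =
     (if j = 1 \<and> k = 1 then (1, 0)
      else if k = j then (complex_of_real (\<Prod>p\<in>{1..4*(j-1)}. sin (\<theta> (j, p))), 0)
      else if 1 \<le> k \<and> k < j then
        (Complex (lq \<theta> j k 1) (lq \<theta> j k 2), Complex (lq \<theta> j k 3) (lq \<theta> j k 4))
      else (0, 0))"

definition qblock :: "complex \<times> complex \<Rightarrow> nat \<Rightarrow> nat \<Rightarrow> complex" where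
  "qblock zw r s = (let (z, w) = zw in
     if r = 0 then (if s = 0 then z else w) else (if s = 0 then - cnj w else cnj z))"

text \<open>The 2N x 2N complex matrix L, 0-indexed: entry (a,b) lies in block
(a div 2 + 1, b div 2 + 1) at position (a mod 2, b mod 2).\<close>
definition L4 :: "(nat \<times> nat \<Rightarrow> real) \<Rightarrow> nat \<Rightarrow> nat \<Rightarrow> complex" where
  "L4 \<theta> a b = qblock (Lblock4 \<theta> (a div 2 + 1) (b div 2 + 1)) (a mod 2) (b mod 2)"

definition R4 :: "nat \<Rightarrow> (nat \<times> nat \<Rightarrow> real) \<Rightarrow> nat \<Rightarrow> nat \<Rightarrow> complex" where
  "R4 N \<theta> a b = (\<Sum>c<2*N. L4 \<theta> a c * cnj (L4 \<theta> b c))"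

text \<open>Four real coordinates of block rho_jk: z = R(2j-2,2k-2), w = R(2j-2,2k-1) (0-indexed).\<close>
definition map4 :: "nat \<Rightarrow> (nat \<times> nat \<Rightarrow> real) \<Rightarrow> nat \<times> nat \<times> nat \<Rightarrow> real" where
  "map4 N \<theta> = (\<lambda>(j, k, s).
     if s = 1 then Re (R4 N \<theta> (2*j-2) (2*k-2))
     else if s = 2 then Im (R4 N \<theta> (2*j-2) (2*k-2))
     else if s = 3 then Re (R4 N \<theta> (2*j-2) (2*k-1))
     else Im (R4 N \<theta> (2*j-2) (2*k-1)))"

end

theory Submission
  imports Defs
begin



lemma pd_eq:
  assumes "((\<lambda>t. f (x(i:=t))) has_real_derivative D) (at (x i))"
  shows "partial_deriv f x i = D"
  unfolding partial_deriv_def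
  using assms DERIV_unique by blast

lemma pd_const:
  assumes "\<And>t. f (x(i:=t)) = f x"
  shows "partial_deriv f x i = 0"
  by (rule pd_eq) (simp add: assms)

lemma prod_list_concat': "prod_list (concat xss) = prod_list (map prod_list xss)"
  by (induction xss) auto

lemma jac_triangular:
  assumes len: "length ins = length outs"
  and mp: "map \<phi> outs = ins"
  and srt: "sorted_wrt lt ins"
  and zero: "\<And>u i. u \<in> set outs \<Longrightarrow> i \<in> set ins \<Longrightarrow> lt (\<phi> u) i \<Longrightarrow> partial_deriv (\<lambda>y. F y u) x i = 0"
  shows "jacobian_det ins outs F x = prod_list (map (\<lambda>u. partial_deriv (\<lambda>y. F y u) x (\<phi> u)) outs)"
proof -
  let ?n = "length outs"
  let ?A = "mat ?n (length ins) (\<lambda>(a, b). partial_deriv (\<lambda>y. F y (outs ! a)) x (ins ! b))"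
  have A: "?A \<in> carrier_mat ?n ?n" using len by simp
  have "det ?A = prod_list (diag_mat ?A)"
  proof (rule det_lower_triangular[OF _ A])
    fix a b assume ab: "a < b" "b < ?n"
    have e: "ins ! a = \<phi> (outs ! a)" using ab len by (simp add: mp[symmetric])
    have bl: "b < length ins" using ab(2) len by simp
    have l: "lt (ins ! a) (ins ! b)" by (rule sorted_wrt_nth_less[OF srt ab(1) bl])
    have m1: "outs ! a \<in> set outs" using ab by simp
    have m2: "ins ! b \<in> set ins" using ab len by simp
    have "partial_deriv (\<lambda>y. F y (outs ! a)) x (ins ! b) = 0"
      using zero[OF m1 m2] l e by metis
    then show "?A $$ (a, b) = 0" using ab len by simp
  qed
  also have "\<dots> = (\<Prod>a = 0..<?n. partial_deriv (\<lambda>y. F y (outs ! a)) x (\<phi> (outs ! a)))"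
    unfolding prod_list_diag_prod dim_row_mat
  proof (rule prod.cong[OF refl])
    fix i assume "i \<in> {0..<?n}"
    then have "ins ! i = \<phi> (outs ! i)" using len by (simp add: mp[symmetric])
    then show "?A $$ (i, i) = partial_deriv (\<lambda>y. F y (outs ! i)) x (\<phi> (outs ! i))"
      using \<open>i \<in> {0..<?n}\<close> len by simp
  qed
  also have "\<dots> = prod_list (map (\<lambda>u. partial_deriv (\<lambda>y. F y u) x (\<phi> u)) outs)"
    by (simp add: prod.list_conv_set_nth)
  finally show ?thesis unfolding jacobian_det_def by simp
qed





lemma prod_list_map_upt: "prod_list (map f [a..<b]) = prod f {a..<b}"
  by (simp add: prod.distinct_set_conv_list[symmetric])

definition lexlt :: "nat \<times> nat \<Rightarrow> nat \<times> nat \<Rightarrow> bool" where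
  "lexlt a b = (fst a < fst b \<or> (fst a = fst b \<and> snd a < snd b))"

definition angB :: "(nat \<Rightarrow> nat) \<Rightarrow> nat \<Rightarrow> (nat \<times> nat) list" where
  "angB f N = concat (map (\<lambda>j. map (\<lambda>p. (j, p)) [1..<f j + 1]) [2..<Suc N])"

definition coB :: "nat \<Rightarrow> nat \<Rightarrow> (nat \<times> nat \<times> nat) list" where
  "coB b N = concat (map (\<lambda>j. concat (map (\<lambda>k. map (\<lambda>c. (j, k, c)) [1..<b+1]) [1..<j])) [2..<Suc N])"

lemma angB_alt: "(\<And>j. 2 \<le> j \<Longrightarrow> g j = f j + 1) \<Longrightarrow>
   concat (map (\<lambda>j. map (\<lambda>p. (j, p)) [1..<g j]) [2..<Suc N]) = angB f N"
  unfolding angB_def by (intro arg_cong[where f=concat] map_cong refl) auto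

lemma angles2_eq: "angles2 N = angB (\<lambda>j. 2*(j-1)) N"
  unfolding angles2_def by (rule angB_alt) simp

lemma angles4_eq: "angles4 N = angB (\<lambda>j. 4*(j-1)) N"
  unfolding angles4_def by (rule angB_alt) simp

lemma upt12: "[1..<2+1] = [1::nat, 2]" by (simp add: upt_rec)
lemma upt14: "[1..<4+1] = [1::nat..<5]" by simp

lemma coords2_eq: "coords2 N = coB 2 N"
  unfolding coords2_def coB_def upt12 ..

lemma coords4_eq: "coords4 N = coB 4 N"
  unfolding coords4_def coB_def upt14 ..

lemma mem_angB: "(j, p) \<in> set (angB f N) \<Longrightarrow> 2 \<le> j \<and> j \<le> N \<and> 1 \<le> p \<and> p \<le> f j"
  unfolding angB_def by auto

lemma mem_coB: "(j, k, c) \<in> set (coB b N) \<Longrightarrow> 2 \<le> j \<and> j \<le> N \<and> 1 \<le> k \<and> k < j \<and> 1 \<le> c \<and> c \<le> b"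
  unfolding coB_def by auto

lemma sorted_angB: "sorted_wrt lexlt (angB f N)"
proof (induction N)
  case 0
  then show ?case by (simp add: angB_def)
next
  case (Suc N)
  show ?case
  proof (cases "2 \<le> Suc N")
    case False
    then show ?thesis by (simp add: angB_def)
  next
    case True
    have eq: "angB f (Suc N) = angB f N @ map (\<lambda>p. (Suc N, p)) [1..<f (Suc N) + 1]"
      unfolding angB_def using True by simp
    have s2: "sorted_wrt lexlt (map (\<lambda>p. (Suc N, p)) [1..<f (Suc N) + 1])"
      unfolding sorted_wrt_map by (rule sorted_wrt_mono_rel[OF _ sorted_wrt_upt]) (auto simp: lexlt_def)
    have cross: "\<forall>x\<in>set (angB f N). \<forall>y\<in>set (map (\<lambda>p. (Suc N, p)) [1..<f (Suc N) + 1]). lexlt x y"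
      by (auto simp: lexlt_def dest!: mem_angB)
    show ?thesis unfolding eq sorted_wrt_append using Suc.IH s2 cross by blast
  qed
qed

lemma map_shift: "map (\<lambda>c::nat. (j, a + c)) [1..<b+1] = map (Pair j) [a+1..<a+1+b]"
  by (induction b) auto

lemma map_coB_aux:
  "map (\<lambda>(j, k, c). (j, b*(k-1)+c)) (concat (map (\<lambda>k. map (\<lambda>c. (j, k, c)) [1..<b+1]) [1..<n+1]))
   = map (\<lambda>p. (j, p)) [1..<b*n+1]"
proof (induction n)
  case 0
  then show ?case by simp
next
  case (Suc n)
  have u: "[1..<b*n+1+b] = [1..<b*n+1] @ [b*n+1..<b*n+1+b]"
    by (rule upt_add_eq_append) simp
  have u2: "b * Suc n + 1 = b*n+1+b" by simp
  have s: "[1..<Suc n + 1] = [1..<n+1] @ [n+1]" by simp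
  have m: "map (\<lambda>(j, k, c). (j, b*(k-1)+c)) (map (\<lambda>c. (j, n+1, c)) [1..<b+1])
        = map (\<lambda>c. (j, b*n + c)) [1..<b+1]" by simp
  have "map (\<lambda>(j, k, c). (j, b*(k-1)+c)) (concat (map (\<lambda>k. map (\<lambda>c. (j, k, c)) [1..<b+1]) [1..<Suc n+1]))
     = map (\<lambda>(j, k, c). (j, b*(k-1)+c)) (concat (map (\<lambda>k. map (\<lambda>c. (j, k, c)) [1..<b+1]) [1..<n+1]))
       @ map (\<lambda>(j, k, c). (j, b*(k-1)+c)) (map (\<lambda>c. (j, n+1, c)) [1..<b+1])"
    unfolding s by simp
  also have "\<dots> = map (Pair j) [1..<b*n+1] @ map (Pair j) [b*n+1..<b*n+1+b]"
    unfolding m Suc.IH map_shift ..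
  also have "\<dots> = map (Pair j) [1..<b * Suc n + 1]"
    unfolding u2 u by simp
  finally show ?case .
qed

lemma map_coB: "map (\<lambda>(j, k, c). (j, b*(k-1)+c)) (coB b N) = angB (\<lambda>j. b*(j-1)) N"
  unfolding coB_def angB_def map_concat map_map
proof (intro arg_cong[where f=concat] map_cong refl)
  fix j assume "j \<in> set [2..<Suc N]"
  then have "2 \<le> j" by auto
  then obtain n where jn: "j = Suc n" by (cases j) auto
  show "(map (\<lambda>(j, k, c). (j, b*(k-1)+c)) \<circ> (\<lambda>j. concat (map (\<lambda>k. map (\<lambda>c. (j, k, c)) [1..<b+1]) [1..<j]))) j
     = map (\<lambda>p. (j, p)) [1..<b*(j-1)+1]"
    unfolding jn comp_def using map_coB_aux[of b "Suc n" n] by (simp only: diff_Suc_1 Suc_eq_plus1 add_diff_cancel_right')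
qed

lemma prod_coB: "prod_list (map g (coB b N)) = (\<Prod>j\<in>{2..<Suc N}. \<Prod>k\<in>{1..<j}. \<Prod>c\<in>{1..<b+1}. g (j, k, c))"
  unfolding coB_def
  by (simp only: prod_list_concat' map_concat map_map comp_def prod_list_map_upt)



lemma prodA:
  fixes n b :: nat
  shows "(\<Prod>k\<in>{1..<n+1}. \<Prod>c\<in>{1..<b+1}. g (b*(k-1)+c)) = (\<Prod>q\<in>{1..<b*n+1}. (g q :: 'a::comm_monoid_mult))"
proof (induction n)
  case 0
  then show ?case by simp
next
  case (Suc n)
  have "(\<Prod>k\<in>{1..<Suc n+1}. \<Prod>c\<in>{1..<b+1}. g (b*(k-1)+c))
      = (\<Prod>k\<in>{1..<n+1}. \<Prod>c\<in>{1..<b+1}. g (b*(k-1)+c)) * (\<Prod>c\<in>{1..<b+1}. g (b*n+c))"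
    by (simp add: prod.atLeastLessThan_Suc)
  also have "(\<Prod>c\<in>{1..<b+1}. g (b*n+c)) = (\<Prod>q\<in>{b*n+1..<b*n+1+b}. g q)"
  proof -
    have "(\<Prod>q\<in>{b*n+1..<b*n+1+b}. g q) = (\<Prod>q\<in>{1+b*n..<(b+1)+b*n}. g q)"
      by (simp add: algebra_simps)
    also have "\<dots> = (\<Prod>c\<in>{1..<b+1}. g (c + b*n))"
      by (rule prod.shift_bounds_nat_ivl)
    finally show ?thesis by (simp add: algebra_simps)
  qed
  finally have 1: "(\<Prod>k\<in>{1..<Suc n+1}. \<Prod>c\<in>{1..<b+1}. g (b*(k-1)+c))
      = (\<Prod>k\<in>{1..<n+1}. \<Prod>c\<in>{1..<b+1}. g (b*(k-1)+c)) * (\<Prod>q\<in>{b*n+1..<b*n+1+b}. g q)" .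
  have 2: "(\<Prod>q\<in>{1..<b*n+1}. g q) * (\<Prod>q\<in>{b*n+1..<b*n+1+b}. g q) = (\<Prod>q\<in>{1..<b*n+1+b}. g q)"
    by (rule prod.atLeastLessThan_concat) auto
  have 3: "b * Suc n + 1 = b*n+1+b" by simp
  show ?case unfolding 1 Suc 2 3 ..
qed

lemma prodB:
  fixes n :: nat
  shows "(\<Prod>q\<in>{1..<n+1}. \<Prod>p\<in>{1..<q+1}. s p) = (\<Prod>p\<in>{1..<n+1}. (s p :: 'a::comm_monoid_mult) ^ (n+1-p))"
proof (induction n)
  case 0
  then show ?case by simp
next
  case (Suc n)
  have "(\<Prod>p\<in>{1..<Suc n+1}. s p ^ (Suc n+1-p)) = (\<Prod>p\<in>{1..<n+1}. s p ^ (Suc n+1-p)) * s (Suc n)"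
    by (simp add: prod.atLeastLessThan_Suc)
  also have "(\<Prod>p\<in>{1..<n+1}. s p ^ (Suc n+1-p)) = (\<Prod>p\<in>{1..<n+1}. s p ^ (n+1-p) * s p)"
    by (intro prod.cong refl) (simp add: Suc_diff_le power_Suc mult.commute)
  also have "\<dots> = (\<Prod>p\<in>{1..<n+1}. s p ^ (n+1-p)) * (\<Prod>p\<in>{1..<n+1}. s p)"
    by (rule prod.distrib)
  finally have r: "(\<Prod>p\<in>{1..<Suc n+1}. s p ^ (Suc n+1-p)) = (\<Prod>p\<in>{1..<n+1}. s p ^ (n+1-p)) * (\<Prod>p\<in>{1..<n+1}. s p) * s (Suc n)" .
  have l: "(\<Prod>q\<in>{1..<Suc n+1}. \<Prod>p\<in>{1..<q+1}. s p) = (\<Prod>q\<in>{1..<n+1}. \<Prod>p\<in>{1..<q+1}. s p) * ((\<Prod>p\<in>{1..<n+1}. s p) * s (Suc n))"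
    by (simp add: prod.atLeastLessThan_Suc)
  show ?case unfolding l r Suc by (simp add: mult.assoc)
qed

lemma prod_main:
  fixes s :: "nat \<Rightarrow> nat \<Rightarrow> real"
  shows "(\<Prod>j\<in>{2..<Suc N}. \<Prod>k\<in>{1..<j}. \<Prod>c\<in>{1..<b+1}.
            (\<Prod>p\<in>{1..<b*(k-1)+c+1}. s j p) * (\<Prod>p\<in>{1..<b*(k-1)+1}. s k p))
       = (\<Prod>j\<in>{2..<Suc N}. \<Prod>p\<in>{1..<b*(j-1)+1}. s j p ^ (b*(N-1)+1-p))"
proof (induction N)
  case 0
  then show ?case by simp
next
  case (Suc N)
  show ?case
  proof (cases "N = 0")
    case True
    then show ?thesis by simp
  next
    case False
    let ?B = "\<lambda>k. (\<Prod>p\<in>{1..<b*(k-1)+1}. s k p)"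
    have L: "(\<Prod>j\<in>{2..<Suc (Suc N)}. \<Prod>k\<in>{1..<j}. \<Prod>c\<in>{1..<b+1}.
            (\<Prod>p\<in>{1..<b*(k-1)+c+1}. s j p) * ?B k)
        = (\<Prod>j\<in>{2..<Suc N}. \<Prod>k\<in>{1..<j}. \<Prod>c\<in>{1..<b+1}.
            (\<Prod>p\<in>{1..<b*(k-1)+c+1}. s j p) * ?B k)
          * (\<Prod>k\<in>{1..<Suc N}. \<Prod>c\<in>{1..<b+1}. (\<Prod>p\<in>{1..<b*(k-1)+c+1}. s (Suc N) p) * ?B k)"
      using False by (simp add: prod.atLeastLessThan_Suc)
    have X1: "(\<Prod>k\<in>{1..<Suc N}. \<Prod>c\<in>{1..<b+1}. (\<Prod>p\<in>{1..<b*(k-1)+c+1}. s (Suc N) p) * ?B k)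
       = (\<Prod>k\<in>{1..<Suc N}. \<Prod>c\<in>{1..<b+1}. (\<Prod>p\<in>{1..<b*(k-1)+c+1}. s (Suc N) p))
         * (\<Prod>k\<in>{1..<Suc N}. ?B k ^ b)"
      by (simp add: prod.distrib)
    have X2: "(\<Prod>k\<in>{1..<Suc N}. \<Prod>c\<in>{1..<b+1}. (\<Prod>p\<in>{1..<b*(k-1)+c+1}. s (Suc N) p))
       = (\<Prod>p\<in>{1..<b*N+1}. s (Suc N) p ^ (b*N+1-p))"
      using prodA[of "\<lambda>q. \<Prod>p\<in>{1..<q+1}. s (Suc N) p" b N] prodB[of "s (Suc N)" "b*N"] by simp
    have X3: "(\<Prod>k\<in>{1..<Suc N}. ?B k ^ b) = (\<Prod>j\<in>{2..<Suc N}. \<Prod>p\<in>{1..<b*(j-1)+1}. s j p ^ b)"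
    proof -
      have e: "{1..<Suc N} = insert 1 {2..<Suc N}" using False by auto
      have "(\<Prod>k\<in>{1..<Suc N}. ?B k ^ b) = ?B 1 ^ b * (\<Prod>k\<in>{2..<Suc N}. ?B k ^ b)"
        unfolding e by (rule prod.insert) auto
      also have "?B 1 = 1" by simp
      finally show ?thesis by (simp only: prod_power_distrib power_one mult_1_left)
    qed
    have R: "(\<Prod>j\<in>{2..<Suc (Suc N)}. \<Prod>p\<in>{1..<b*(j-1)+1}. s j p ^ (b*(Suc N-1)+1-p))
       = (\<Prod>j\<in>{2..<Suc N}. \<Prod>p\<in>{1..<b*(j-1)+1}. s j p ^ (b*(N-1)+1-p))
         * (\<Prod>j\<in>{2..<Suc N}. \<Prod>p\<in>{1..<b*(j-1)+1}. s j p ^ b)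
         * (\<Prod>p\<in>{1..<b*N+1}. s (Suc N) p ^ (b*N+1-p))"
    proof -
      have "(\<Prod>j\<in>{2..<Suc N}. \<Prod>p\<in>{1..<b*(j-1)+1}. s j p ^ (b*(Suc N-1)+1-p))
          = (\<Prod>j\<in>{2..<Suc N}. \<Prod>p\<in>{1..<b*(j-1)+1}. s j p ^ (b*(N-1)+1-p) * s j p ^ b)"
      proof (intro prod.cong refl)
        fix j p assume j: "j \<in> {2..<Suc N}" and p: "p \<in> {1..<b*(j-1)+1}"
        have "b*(j-1) \<le> b*(N-1)" using j by (intro mult_le_mono2) auto
        then have "b*(Suc N-1)+1-p = (b*(N-1)+1-p) + b" using p False
          by (cases N) (auto simp: algebra_simps)
        then show "s j p ^ (b*(Suc N-1)+1-p) = s j p ^ (b*(N-1)+1-p) * s j p ^ b"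
          by (simp add: power_add)
      qed
      then show ?thesis using False by (simp add: prod.atLeastLessThan_Suc prod.distrib)
    qed
    show ?thesis unfolding L X1 X2 X3 R Suc by (simp add: mult.assoc)
  qed
qed


lemma assemble:
  fixes F :: "(nat \<times> nat \<Rightarrow> real) \<Rightarrow> nat \<times> nat \<times> nat \<Rightarrow> real"
  assumes zero: "\<And>j k c i. (j, k, c) \<in> set (coB b N) \<Longrightarrow> i \<in> set (angB (\<lambda>j. b*(j-1)) N)
      \<Longrightarrow> lexlt (j, b*(k-1)+c) i \<Longrightarrow> partial_deriv (\<lambda>y. F y (j, k, c)) \<theta> i = 0"
  and diag: "\<And>j k c. 2 \<le> j \<Longrightarrow> j \<le> N \<Longrightarrow> 1 \<le> k \<Longrightarrow> k < j \<Longrightarrow> 1 \<le> c \<Longrightarrow> c \<le> b \<Longrightarrow>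
      partial_deriv (\<lambda>y. F y (j, k, c)) \<theta> (j, b*(k-1)+c) =
        - ((\<Prod>p\<in>{1..<b*(k-1)+c+1}. sin (\<theta> (j, p))) * (\<Prod>p\<in>{1..<b*(k-1)+1}. sin (\<theta> (k, p))))"
  and pos: "\<And>j p. 2 \<le> j \<Longrightarrow> j \<le> N \<Longrightarrow> 1 \<le> p \<Longrightarrow> p \<le> b*(j-1) \<Longrightarrow> 0 < sin (\<theta> (j, p))"
  shows "\<bar>jacobian_det (angB (\<lambda>j. b*(j-1)) N) (coB b N) F \<theta>\<bar>
     = (\<Prod>j\<in>{2..<Suc N}. \<Prod>p\<in>{1..<b*(j-1)+1}. sin (\<theta> (j, p)) ^ (b*(N-1)+1-p))"
proof -
  let ?\<phi> = "\<lambda>(j::nat, k::nat, c::nat). (j, b*(k-1)+c)"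
  let ?d = "\<lambda>(j::nat, k::nat, c::nat). (\<Prod>p\<in>{1..<b*(k-1)+c+1}. sin (\<theta> (j, p))) * (\<Prod>p\<in>{1..<b*(k-1)+1}. sin (\<theta> (k, p)))"
  have mp: "map ?\<phi> (coB b N) = angB (\<lambda>j. b*(j-1)) N" by (rule map_coB)
  have len: "length (angB (\<lambda>j. b*(j-1)) N) = length (coB b N)"
    by (metis mp length_map)
  have "jacobian_det (angB (\<lambda>j. b*(j-1)) N) (coB b N) F \<theta>
      = prod_list (map (\<lambda>u. partial_deriv (\<lambda>y. F y u) \<theta> (?\<phi> u)) (coB b N))"
  proof (rule jac_triangular[OF len mp sorted_angB])
    fix u i assume a: "u \<in> set (coB b N)" "i \<in> set (angB (\<lambda>j. b*(j-1)) N)" "lexlt (?\<phi> u) i"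
    obtain j k c where ujkc: "u = (j, k, c)" by (cases u) auto
    show "partial_deriv (\<lambda>y. F y u) \<theta> i = 0"
      using a zero[of j k c i] unfolding ujkc by simp
  qed
  also have "\<dots> = prod_list (map (\<lambda>u. - ?d u) (coB b N))"
  proof (rule arg_cong[where f=prod_list], rule map_cong[OF refl])
    fix u assume u: "u \<in> set (coB b N)"
    obtain j k c where ujkc: "u = (j, k, c)" by (cases u) auto
    show "partial_deriv (\<lambda>y. F y u) \<theta> (?\<phi> u) = - ?d u"
      using u mem_coB[of j k c b N] diag[of j k c] unfolding ujkc by auto
  qed
  also have "\<dots> = (\<Prod>j\<in>{2..<Suc N}. \<Prod>k\<in>{1..<j}. \<Prod>c\<in>{1..<b+1}. - ?d (j, k, c))"
    by (rule prod_coB)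
  finally have J: "jacobian_det (angB (\<lambda>j. b*(j-1)) N) (coB b N) F \<theta> = \<dots>" .
  have "\<bar>jacobian_det (angB (\<lambda>j. b*(j-1)) N) (coB b N) F \<theta>\<bar>
      = (\<Prod>j\<in>{2..<Suc N}. \<Prod>k\<in>{1..<j}. \<Prod>c\<in>{1..<b+1}. ?d (j, k, c))"
    unfolding J abs_prod
  proof (intro prod.cong refl)
    fix j k c assume j: "j \<in> {2..<Suc N}" and k: "k \<in> {1..<j}" and c: "c \<in> {1..<b+1}"
    have "0 \<le> (\<Prod>p\<in>{1..<b*(k-1)+c+1}. sin (\<theta> (j, p)))"
    proof (rule prod_nonneg)
      fix p assume p: "p \<in> {1..<b*(k-1)+c+1}"
      have "b*(k-1) + c \<le> b*(j-1)"
      proof -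
        have "b*(k-1) + c \<le> b*(k-1) + b" using c by simp
        also have "\<dots> = b*k" using k by (cases k) auto
        also have "\<dots> \<le> b*(j-1)" using k by (intro mult_le_mono2) auto
        finally show ?thesis .
      qed
      then show "0 \<le> sin (\<theta> (j, p))" using j p pos[of j p] by fastforce
    qed
    moreover have "0 \<le> (\<Prod>p\<in>{1..<b*(k-1)+1}. sin (\<theta> (k, p)))"
    proof (rule prod_nonneg)
      fix p assume p: "p \<in> {1..<b*(k-1)+1}"
      then have "2 \<le> k" using k by (cases "k = 1") auto
      then show "0 \<le> sin (\<theta> (k, p))" using j k p pos[of k p] by fastforce
    qed
    ultimately show "\<bar>- ?d (j, k, c)\<bar> = ?d (j, k, c)" by simp
  qed
  also have "\<dots> = (\<Prod>j\<in>{2..<Suc N}. \<Prod>p\<in>{1..<b*(j-1)+1}. sin (\<theta> (j, p)) ^ (b*(N-1)+1-p))"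
    using prod_main[where s="\<lambda>j p. sin (\<theta> (j, p))" and b=b and N=N] by simp
  finally show ?thesis .
qed



definition P2 :: "(nat \<times> nat \<Rightarrow> real) \<Rightarrow> nat \<Rightarrow> nat \<Rightarrow> real" where
  "P2 \<theta> j k = (\<Prod>p\<in>{1..2*k-2}. sin (\<theta> (j, p)))"

lemma L2_diag: "1 \<le> k \<Longrightarrow> L2 \<theta> k k = complex_of_real (P2 \<theta> k k)"
  unfolding L2_def P2_def by auto

lemma L2_above: "j < k \<Longrightarrow> L2 \<theta> j k = 0"
  unfolding L2_def by auto

lemma L2_off: "1 \<le> k \<Longrightarrow> k < j \<Longrightarrow> L2 \<theta> j k =
   (complex_of_real (cos (\<theta> (j, 2*k-1))) + \<i> * complex_of_real (cos (\<theta> (j, 2*k)) * sin (\<theta> (j, 2*k-1))))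
        * complex_of_real (P2 \<theta> j k)"
  unfolding L2_def P2_def by auto

lemma Re_L2: "1 \<le> k \<Longrightarrow> k < j \<Longrightarrow> Re (L2 \<theta> j k) = cos (\<theta> (j, 2*k-1)) * P2 \<theta> j k"
  by (simp add: L2_off)

lemma Im_L2: "1 \<le> k \<Longrightarrow> k < j \<Longrightarrow> Im (L2 \<theta> j k) = cos (\<theta> (j, 2*k)) * sin (\<theta> (j, 2*k-1)) * P2 \<theta> j k"
  by (simp add: L2_off)

lemma R2_expand:
  assumes "1 \<le> k" "k < j" "j \<le> N"
  shows "R2 N \<theta> j k = (\<Sum>m\<in>{1..<k}. L2 \<theta> j m * cnj (L2 \<theta> k m)) + L2 \<theta> j k * complex_of_real (P2 \<theta> k k)"
proof -
  have "R2 N \<theta> j k = (\<Sum>m\<in>{1..k}. L2 \<theta> j m * cnj (L2 \<theta> k m))"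
    unfolding R2_def using assms by (intro sum.mono_neutral_right) (auto simp: L2_above)
  also have "{1..k} = insert k {1..<k}" using assms by auto
  also have "(\<Sum>m\<in>insert k {1..<k}. L2 \<theta> j m * cnj (L2 \<theta> k m))
     = L2 \<theta> j k * cnj (L2 \<theta> k k) + (\<Sum>m\<in>{1..<k}. L2 \<theta> j m * cnj (L2 \<theta> k m))"
    by (rule sum.insert) auto
  finally show ?thesis using assms by (simp add: L2_diag)
qed

definition H2 :: "(nat \<times> nat \<Rightarrow> real) \<Rightarrow> nat \<Rightarrow> nat \<Rightarrow> nat \<Rightarrow> real" where
  "H2 \<theta> j k c = (\<Sum>m\<in>{1..<k}. (if c = 1 then Re else Im) (L2 \<theta> j m * cnj (L2 \<theta> k m)))"

definition l2c :: "(nat \<times> nat \<Rightarrow> real) \<Rightarrow> nat \<Rightarrow> nat \<Rightarrow> nat \<Rightarrow> real" where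
  "l2c \<theta> j k c = (if c = 1 then cos (\<theta> (j, 2*k-1)) * P2 \<theta> j k
                   else cos (\<theta> (j, 2*k)) * sin (\<theta> (j, 2*k-1)) * P2 \<theta> j k)"

lemma map2_expand:
  assumes "1 \<le> k" "k < j" "j \<le> N"
  shows "map2 N \<theta> (j, k, c) = H2 \<theta> j k c + l2c \<theta> j k c * P2 \<theta> k k"
  using assms by (simp add: map2_def R2_expand H2_def l2c_def Re_L2 Im_L2 Re_sum Im_sum)

lemma L2_upd_row: "a \<noteq> j \<Longrightarrow> L2 (\<theta>((a, p) := t)) j k = L2 \<theta> j k"
  unfolding L2_def by simp

lemma P2_upd: "a \<noteq> j \<or> 2*k-2 < p \<Longrightarrow> P2 (\<theta>((a, p) := t)) j k = P2 \<theta> j k"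
  unfolding P2_def by (auto intro!: prod.cong)

lemma L2_upd_col:
  assumes "1 \<le> k" "k < j" "2*k < p"
  shows "L2 (\<theta>((j, p) := t)) j k = L2 \<theta> j k"
proof -
  have P: "P2 (\<theta>((j, p) := t)) j k = P2 \<theta> j k" by (rule P2_upd) (use assms in auto)
  have "2*k-1 \<noteq> p" "2*k \<noteq> p" using assms by auto
  then show ?thesis using assms P by (simp add: L2_off)
qed

lemma H2_upd:
  assumes "a \<noteq> k" "a \<noteq> j \<or> 2*(k-1) < p" "k < j"
  shows "H2 (\<theta>((a, p) := t)) j k c = H2 \<theta> j k c"
  unfolding H2_def
proof (intro sum.cong refl)
  fix m assume m: "m \<in> {1..<k}"
  have 1: "L2 (\<theta>((a, p) := t)) k m = L2 \<theta> k m" using assms by (simp add: L2_upd_row)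
  have 2: "L2 (\<theta>((a, p) := t)) j m = L2 \<theta> j m"
  proof (cases "a = j")
    case True
    have "2*m < p" using assms m True by auto
    then show ?thesis using assms m True by (simp add: L2_upd_col)
  next
    case False
    then show ?thesis by (simp add: L2_upd_row)
  qed
  show "(if c = 1 then Re else Im) (L2 (\<theta>((a, p) := t)) j m * cnj (L2 (\<theta>((a, p) := t)) k m)) =
        (if c = 1 then Re else Im) (L2 \<theta> j m * cnj (L2 \<theta> k m))" by (simp only: 1 2)
qed

lemma zero2:
  assumes u: "(j, k, c) \<in> set (coB 2 N)" and i: "i \<in> set (angB (\<lambda>j. 2*(j-1)) N)"
    and lt: "lexlt (j, 2*(k-1)+c) i"
  shows "partial_deriv (\<lambda>y. map2 N y (j, k, c)) \<theta> i = 0"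
proof -
  obtain a p where ip: "i = (a, p)" by (cases i) auto
  have jk: "2 \<le> j" "j \<le> N" "1 \<le> k" "k < j" "1 \<le> c" "c \<le> 2" using mem_coB[OF u] by auto
  have ap: "a \<le> N" using mem_angB[of a p] i ip by auto
  have lt': "j < a \<or> (j = a \<and> 2*(k-1)+c < p)" using lt ip by (simp add: lexlt_def)
  show ?thesis unfolding ip
  proof (rule pd_const)
    fix t
    let ?t = "\<theta>((a, p) := t)"
    have H: "H2 ?t j k c = H2 \<theta> j k c" using lt' jk by (intro H2_upd) auto
    have P: "P2 ?t k k = P2 \<theta> k k" using lt' jk by (intro P2_upd) auto
    have l: "l2c ?t j k c = l2c \<theta> j k c"
    proof (cases "a = j")
      case False
      then show ?thesis unfolding l2c_def by (simp add: P2_upd)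
    next
      case True
      then have "2*(k-1)+c < p" using lt' by auto
      then show ?thesis using True jk unfolding l2c_def by (auto simp: P2_upd)
    qed
    show "map2 N ?t (j, k, c) = map2 N \<theta> (j, k, c)"
      using jk by (simp add: map2_expand H P l)
  qed
qed

lemma diag2:
  assumes jk: "2 \<le> j" "j \<le> N" "1 \<le> k" "k < j" "1 \<le> c" "c \<le> 2"
  shows "partial_deriv (\<lambda>y. map2 N y (j, k, c)) \<theta> (j, 2*(k-1)+c) =
        - ((\<Prod>p\<in>{1..<2*(k-1)+c+1}. sin (\<theta> (j, p))) * (\<Prod>p\<in>{1..<2*(k-1)+1}. sin (\<theta> (k, p))))"
proof -
  let ?q = "2*(k-1)+c"
  have Pk: "P2 \<theta> k k = (\<Prod>p\<in>{1..<2*(k-1)+1}. sin (\<theta> (k, p)))"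
  proof -
    have "{1..2*k-2} = {1..<2*(k-1)+1}" using jk by auto
    then show ?thesis unfolding P2_def by simp
  qed
  have Pj: "P2 \<theta> j k = (\<Prod>p\<in>{1..<2*(k-1)+1}. sin (\<theta> (j, p)))"
  proof -
    have "{1..2*k-2} = {1..<2*(k-1)+1}" using jk by auto
    then show ?thesis unfolding P2_def by simp
  qed
  define K where "K = (if c = 1 then P2 \<theta> j k else sin (\<theta> (j, 2*k-1)) * P2 \<theta> j k) * P2 \<theta> k k"
  have f: "map2 N (\<theta>((j, ?q) := t)) (j, k, c) = H2 \<theta> j k c + cos t * K" for t
  proof -
    let ?t = "\<theta>((j, ?q) := t)"
    have H: "H2 ?t j k c = H2 \<theta> j k c" using jk by (intro H2_upd) auto
    have P: "P2 ?t k k = P2 \<theta> k k" using jk by (intro P2_upd) auto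
    have P': "P2 ?t j k = P2 \<theta> j k" using jk by (intro P2_upd) auto
    have l: "l2c ?t j k c = cos t * (if c = 1 then P2 \<theta> j k else sin (\<theta> (j, 2*k-1)) * P2 \<theta> j k)"
    proof (cases "c = 1")
      case True
      then have "?q = 2*k-1" using jk by auto
      then show ?thesis using True unfolding l2c_def P' by simp
    next
      case False
      then have c2: "c = 2" using jk by auto
      then have "?q = 2*k" using jk by auto
      moreover have "2*k-1 \<noteq> 2*k" using jk by auto
      ultimately show ?thesis using c2 unfolding l2c_def P' by simp
    qed
    show ?thesis unfolding map2_expand[OF jk(3) jk(4) jk(2)] H P l K_def by (simp add: mult_ac)
  qed
  have D: "((\<lambda>t. map2 N (\<theta>((j, ?q) := t)) (j, k, c)) has_real_derivative (- sin (\<theta> (j, ?q)) * K)) (at (\<theta> (j, ?q)))"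
    unfolding f by (auto intro!: derivative_eq_intros)
  have "partial_deriv (\<lambda>y. map2 N y (j, k, c)) \<theta> (j, ?q) = - sin (\<theta> (j, ?q)) * K"
    using pd_eq[OF D] .
  also have "\<dots> = - ((\<Prod>p\<in>{1..<?q+1}. sin (\<theta> (j, p))) * (\<Prod>p\<in>{1..<2*(k-1)+1}. sin (\<theta> (k, p))))"
  proof (cases "c = 1")
    case True
    then show ?thesis unfolding K_def Pk Pj using True
      by (simp add: prod.atLeastLessThan_Suc mult_ac)
  next
    case False
    then have c2: "c = 2" using jk by auto
    have e: "2*k-1 = 2*(k-1)+1" using jk by auto
    show ?thesis unfolding K_def Pk Pj e using c2
      by (simp add: prod.atLeastLessThan_Suc mult_ac)
  qed
  finally show ?thesis .
qed

lemma case2: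
  assumes N: "N \<ge> 2"
    and pos: "\<forall>j p. 2 \<le> j \<and> j \<le> N \<and> 1 \<le> p \<and> p \<le> 2*j-2 \<longrightarrow> 0 < \<theta> (j, p) \<and> \<theta> (j, p) < pi"
  shows "\<bar>jacobian_det (angles2 N) (coords2 N) (map2 N) \<theta>\<bar> =
              (\<Prod>j\<in>{2..N}. \<Prod>p\<in>{1..2*j-2}. sin (\<theta> (j, p)) ^ (2*N-p-1))"
proof -
  have "\<bar>jacobian_det (angles2 N) (coords2 N) (map2 N) \<theta>\<bar>
     = (\<Prod>j\<in>{2..<Suc N}. \<Prod>p\<in>{1..<2*(j-1)+1}. sin (\<theta> (j, p)) ^ (2*(N-1)+1-p))"
    unfolding angles2_eq coords2_eq
  proof (rule assemble)
    fix j k c :: nat and i assume "(j, k, c) \<in> set (coB 2 N)" "i \<in> set (angB (\<lambda>j. 2*(j-1)) N)" "lexlt (j, 2*(k-1)+c) i"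
    then show "partial_deriv (\<lambda>y. map2 N y (j, k, c)) \<theta> i = 0" by (rule zero2)
  next
    fix j k c :: nat assume "2 \<le> j" "j \<le> N" "1 \<le> k" "k < j" "1 \<le> c" "c \<le> 2"
    then show "partial_deriv (\<lambda>y. map2 N y (j, k, c)) \<theta> (j, 2*(k-1)+c) =
        - ((\<Prod>p\<in>{1..<2*(k-1)+c+1}. sin (\<theta> (j, p))) * (\<Prod>p\<in>{1..<2*(k-1)+1}. sin (\<theta> (k, p))))"
      by (rule diag2)
  next
    fix j p assume "2 \<le> j" "j \<le> N" "1 \<le> p" "p \<le> 2*(j-1)"
    then show "0 < sin (\<theta> (j, p))" using pos by (intro sin_gt_zero) auto
  qed
  also have "\<dots> = (\<Prod>j\<in>{2..N}. \<Prod>p\<in>{1..2*j-2}. sin (\<theta> (j, p)) ^ (2*N-p-1))"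
  proof (rule prod.cong)
    show "{2..<Suc N} = {2..N}" by auto
  next
    fix j assume j: "j \<in> {2..N}"
    show "(\<Prod>p\<in>{1..<2*(j-1)+1}. sin (\<theta> (j, p)) ^ (2*(N-1)+1-p)) = (\<Prod>p\<in>{1..2*j-2}. sin (\<theta> (j, p)) ^ (2*N-p-1))"
    proof (rule prod.cong)
      show "{1..<2*(j-1)+1} = {1..2*j-2}" using j by auto
    next
      fix p assume "p \<in> {1..2*j-2}"
      then have "2*(N-1)+1-p = 2*N-p-1" using j N by auto
      then show "sin (\<theta> (j, p)) ^ (2*(N-1)+1-p) = sin (\<theta> (j, p)) ^ (2*N-p-1)" by simp
    qed
  qed
  finally show ?thesis .
qed



definition Q4 :: "(nat \<times> nat \<Rightarrow> real) \<Rightarrow> nat \<Rightarrow> nat \<Rightarrow> real" where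
  "Q4 \<theta> j k = (\<Prod>p\<in>{1..4*(k-1)}. sin (\<theta> (j, p)))"

lemma lq_alt: "lq \<theta> j k s = cos (\<theta> (j, 4*(k-1)+s)) * (\<Prod>m\<in>{1..s-1}. sin (\<theta> (j, 4*(k-1)+m))) * Q4 \<theta> j k"
  unfolding lq_def Q4_def ..

lemma LB_diag: "1 \<le> k \<Longrightarrow> Lblock4 \<theta> k k = (complex_of_real (Q4 \<theta> k k), 0)"
  unfolding Lblock4_def Q4_def by auto

lemma LB_above: "j < k \<Longrightarrow> Lblock4 \<theta> j k = (0, 0)"
  unfolding Lblock4_def by auto

lemma LB_off: "1 \<le> k \<Longrightarrow> k < j \<Longrightarrow> Lblock4 \<theta> j k =
    (Complex (lq \<theta> j k 1) (lq \<theta> j k 2), Complex (lq \<theta> j k 3) (lq \<theta> j k 4))"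
  unfolding Lblock4_def by auto

lemma sum_pairs:
  fixes N :: nat and f :: "nat \<Rightarrow> 'a::comm_monoid_add"
  shows "(\<Sum>c<2*N. f c) = (\<Sum>m<N. (f (2*m) + f (2*m+1) :: 'a::comm_monoid_add))"
  by (induction N) (simp_all add: add.assoc)

lemma L4_row0: "1 \<le> j \<Longrightarrow> L4 \<theta> (2*j-2) (2*m) = fst (Lblock4 \<theta> j (m+1))"
proof -
  assume j: "1 \<le> j"
  have "(2*j-2) div 2 = j-1" "(2*j-2) mod 2 = 0" using j by presburger+
  then show ?thesis unfolding L4_def qblock_def using j by (simp add: case_prod_beta)
qed

lemma L4_row0': "1 \<le> j \<Longrightarrow> L4 \<theta> (2*j-2) (2*m+1) = snd (Lblock4 \<theta> j (m+1))"
proof -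
  assume j: "1 \<le> j"
  have "(2*j-2) div 2 = j-1" "(2*j-2) mod 2 = 0" using j by presburger+
  then show ?thesis unfolding L4_def qblock_def using j by (simp add: case_prod_beta)
qed

lemma L4_row1: "1 \<le> k \<Longrightarrow> L4 \<theta> (2*k-1) (2*m) = - cnj (snd (Lblock4 \<theta> k (m+1)))"
proof -
  assume k: "1 \<le> k"
  have "(2*k-1) div 2 = k-1" "(2*k-1) mod 2 = 1" using k by presburger+
  then show ?thesis unfolding L4_def qblock_def using k by (simp add: case_prod_beta)
qed

lemma L4_row1': "1 \<le> k \<Longrightarrow> L4 \<theta> (2*k-1) (2*m+1) = cnj (fst (Lblock4 \<theta> k (m+1)))"
proof -
  assume k: "1 \<le> k"
  have "(2*k-1) div 2 = k-1" "(2*k-1) mod 2 = 1" using k by presburger+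
  then show ?thesis unfolding L4_def qblock_def using k by (simp add: case_prod_beta)
qed

definition gz :: "(nat \<times> nat \<Rightarrow> real) \<Rightarrow> nat \<Rightarrow> nat \<Rightarrow> nat \<Rightarrow> complex" where
  "gz \<theta> j k m = fst (Lblock4 \<theta> j m) * cnj (fst (Lblock4 \<theta> k m)) + snd (Lblock4 \<theta> j m) * cnj (snd (Lblock4 \<theta> k m))"

definition gw :: "(nat \<times> nat \<Rightarrow> real) \<Rightarrow> nat \<Rightarrow> nat \<Rightarrow> nat \<Rightarrow> complex" where
  "gw \<theta> j k m = - (fst (Lblock4 \<theta> j m) * snd (Lblock4 \<theta> k m)) + snd (Lblock4 \<theta> j m) * fst (Lblock4 \<theta> k m)"

lemma reindex:
  fixes N :: nat and g :: "nat \<Rightarrow> complex"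
  shows "(\<Sum>m<N. g (m+1)) = (\<Sum>m\<in>{1..N}. (g m :: complex))"
  using sum.atLeast1_atMost_eq[of g N] by simp

lemma R4z: "1 \<le> j \<Longrightarrow> 1 \<le> k \<Longrightarrow> R4 N \<theta> (2*j-2) (2*k-2) = (\<Sum>m\<in>{1..N}. gz \<theta> j k m)"
proof -
  assume j: "1 \<le> j" and k: "1 \<le> k"
  have "R4 N \<theta> (2*j-2) (2*k-2) = (\<Sum>m<N. gz \<theta> j k (m+1))"
    unfolding R4_def sum_pairs gz_def using L4_row0[OF j] L4_row0'[OF j] L4_row0[OF k] L4_row0'[OF k]
    by simp
  then show ?thesis by (simp only: reindex)
qed

lemma R4w: "1 \<le> j \<Longrightarrow> 1 \<le> k \<Longrightarrow> R4 N \<theta> (2*j-2) (2*k-1) = (\<Sum>m\<in>{1..N}. gw \<theta> j k m)"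
proof -
  assume j: "1 \<le> j" and k: "1 \<le> k"
  have "R4 N \<theta> (2*j-2) (2*k-1) = (\<Sum>m<N. gw \<theta> j k (m+1))"
    unfolding R4_def sum_pairs gw_def using L4_row0[OF j] L4_row0'[OF j] L4_row1[OF k] L4_row1'[OF k]
    by simp
  then show ?thesis by (simp only: reindex)
qed

lemma sum_cut:
  fixes N k :: nat and g :: "nat \<Rightarrow> complex"
  assumes "1 \<le> k" "k \<le> N" "\<And>m. k < m \<Longrightarrow> g m = 0"
  shows "(\<Sum>m\<in>{1..N}. g m) = (\<Sum>m\<in>{1..<k}. g m) + (g k :: complex)"
proof -
  have "(\<Sum>m\<in>{1..N}. g m) = (\<Sum>m\<in>{1..k}. g m)"
    using assms by (intro sum.mono_neutral_right) auto
  also have "{1..k} = insert k {1..<k}" using assms by auto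
  also have "(\<Sum>m\<in>insert k {1..<k}. g m) = g k + (\<Sum>m\<in>{1..<k}. g m)"
    by (rule sum.insert) auto
  finally show ?thesis by simp
qed

definition sel :: "nat \<Rightarrow> complex \<Rightarrow> complex \<Rightarrow> real" where
  "sel s z w = (if s = 1 then Re z else if s = 2 then Im z else if s = 3 then Re w else Im w)"

definition H4 :: "(nat \<times> nat \<Rightarrow> real) \<Rightarrow> nat \<Rightarrow> nat \<Rightarrow> nat \<Rightarrow> real" where
  "H4 \<theta> j k s = (\<Sum>m\<in>{1..<k}. sel s (gz \<theta> j k m) (gw \<theta> j k m))"

lemma map4_expand:
  assumes "1 \<le> k" "k < j" "j \<le> N" "1 \<le> s" "s \<le> 4"
  shows "map4 N \<theta> (j, k, s) = H4 \<theta> j k s + lq \<theta> j k s * Q4 \<theta> k k"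
proof -
  have z: "R4 N \<theta> (2*j-2) (2*k-2) = (\<Sum>m\<in>{1..<k}. gz \<theta> j k m) + gz \<theta> j k k"
    using assms by (simp only: R4z) (rule sum_cut, auto simp: gz_def LB_above)
  have w: "R4 N \<theta> (2*j-2) (2*k-1) = (\<Sum>m\<in>{1..<k}. gw \<theta> j k m) + gw \<theta> j k k"
    using assms by (simp only: R4w) (rule sum_cut, auto simp: gw_def LB_above)
  have gzk: "gz \<theta> j k k = Complex (lq \<theta> j k 1) (lq \<theta> j k 2) * complex_of_real (Q4 \<theta> k k)"
    using assms by (simp add: gz_def LB_diag LB_off)
  have gwk: "gw \<theta> j k k = Complex (lq \<theta> j k 3) (lq \<theta> j k 4) * complex_of_real (Q4 \<theta> k k)"
    using assms by (simp add: gw_def LB_diag LB_off)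
  have "s = 1 \<or> s = 2 \<or> s = 3 \<or> s = 4" using assms by auto
  then show ?thesis
    unfolding map4_def H4_def sel_def using z w gzk gwk
    by (auto simp: Re_sum Im_sum)
qed

lemma lq_upd: "1 \<le> s \<Longrightarrow> a \<noteq> j \<or> 4*(k-1)+s < p \<Longrightarrow> lq (\<theta>((a, p) := t)) j k s = lq \<theta> j k s"
  unfolding lq_def
  apply (intro arg_cong2[where f="(*)"] prod.cong refl)
  apply auto
  done

lemma Q4_upd: "a \<noteq> j \<or> 4*(k-1) < p \<Longrightarrow> Q4 (\<theta>((a, p) := t)) j k = Q4 \<theta> j k"
  unfolding Q4_def by (auto intro!: prod.cong)

lemma LB_upd_row: "a \<noteq> j \<Longrightarrow> Lblock4 (\<theta>((a, p) := t)) j k = Lblock4 \<theta> j k"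
  unfolding Lblock4_def lq_def by simp

lemma LB_upd_col:
  assumes "1 \<le> m" "m < j" "4*m < p"
  shows "Lblock4 (\<theta>((j, p) := t)) j m = Lblock4 \<theta> j m"
proof -
  have "lq (\<theta>((j, p) := t)) j m s = lq \<theta> j m s" if "1 \<le> s" "s \<le> 4" for s
    using assms that by (intro lq_upd) auto
  then show ?thesis using assms by (simp add: LB_off)
qed

lemma H4_upd:
  assumes "a \<noteq> k" "a \<noteq> j \<or> 4*(k-1) < p" "k < j"
  shows "H4 (\<theta>((a, p) := t)) j k s = H4 \<theta> j k s"
  unfolding H4_def
proof (intro sum.cong refl)
  fix m assume m: "m \<in> {1..<k}"
  have 1: "Lblock4 (\<theta>((a, p) := t)) k m = Lblock4 \<theta> k m" using assms by (simp add: LB_upd_row)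
  have 2: "Lblock4 (\<theta>((a, p) := t)) j m = Lblock4 \<theta> j m"
  proof (cases "a = j")
    case True
    have "4*m < p" using assms m True by auto
    have "Lblock4 (\<theta>((j, p) := t)) j m = Lblock4 \<theta> j m"
      by (rule LB_upd_col) (use assms m \<open>4*m < p\<close> in auto)
    then show ?thesis using True by simp
  next
    case False
    then show ?thesis by (simp add: LB_upd_row)
  qed
  show "sel s (gz (\<theta>((a, p) := t)) j k m) (gw (\<theta>((a, p) := t)) j k m) = sel s (gz \<theta> j k m) (gw \<theta> j k m)"
    unfolding gz_def gw_def 1 2 ..
qed

lemma zero4:
  assumes u: "(j, k, s) \<in> set (coB 4 N)" and i: "i \<in> set (angB (\<lambda>j. 4*(j-1)) N)"
    and lt: "lexlt (j, 4*(k-1)+s) i"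
  shows "partial_deriv (\<lambda>y. map4 N y (j, k, s)) \<theta> i = 0"
proof -
  obtain a p where ip: "i = (a, p)" by (cases i) auto
  have jk: "2 \<le> j" "j \<le> N" "1 \<le> k" "k < j" "1 \<le> s" "s \<le> 4" using mem_coB[OF u] by auto
  have lt': "j < a \<or> (j = a \<and> 4*(k-1)+s < p)" using lt ip by (simp add: lexlt_def)
  show ?thesis unfolding ip
  proof (rule pd_const)
    fix t
    let ?t = "\<theta>((a, p) := t)"
    have H: "H4 ?t j k s = H4 \<theta> j k s" using lt' jk by (intro H4_upd) auto
    have Q: "Q4 ?t k k = Q4 \<theta> k k" using lt' jk by (intro Q4_upd) auto
    have l: "lq ?t j k s = lq \<theta> j k s" using lt' jk by (intro lq_upd) auto
    show "map4 N ?t (j, k, s) = map4 N \<theta> (j, k, s)"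
      unfolding map4_expand[OF jk(3) jk(4) jk(2) jk(5) jk(6)] H Q l ..
  qed
qed

lemma prod_split_shift:
  fixes a s :: nat and f :: "nat \<Rightarrow> real"
  shows "(\<Prod>p\<in>{1..<a+s+1}. f p) = (\<Prod>p\<in>{1..<a+1}. f p) * (\<Prod>m\<in>{1..<s+1}. (f (a+m) :: real))"
  by (induction s) (simp_all add: prod.atLeastLessThan_Suc mult_ac)

lemma diag4:
  assumes jk: "2 \<le> j" "j \<le> N" "1 \<le> k" "k < j" "1 \<le> s" "s \<le> 4"
  shows "partial_deriv (\<lambda>y. map4 N y (j, k, s)) \<theta> (j, 4*(k-1)+s) =
        - ((\<Prod>p\<in>{1..<4*(k-1)+s+1}. sin (\<theta> (j, p))) * (\<Prod>p\<in>{1..<4*(k-1)+1}. sin (\<theta> (k, p))))"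
proof -
  let ?q = "4*(k-1)+s"
  have Qk: "Q4 \<theta> k k = (\<Prod>p\<in>{1..<4*(k-1)+1}. sin (\<theta> (k, p)))"
    unfolding Q4_def by (simp add: atLeastLessThanSuc_atLeastAtMost)
  have Qj: "Q4 \<theta> j k = (\<Prod>p\<in>{1..<4*(k-1)+1}. sin (\<theta> (j, p)))"
    unfolding Q4_def by (simp add: atLeastLessThanSuc_atLeastAtMost)
  define K where "K = (\<Prod>m\<in>{1..s-1}. sin (\<theta> (j, 4*(k-1)+m))) * Q4 \<theta> j k * Q4 \<theta> k k"
  have f: "map4 N (\<theta>((j, ?q) := t)) (j, k, s) = H4 \<theta> j k s + cos t * K" for t
  proof -
    let ?t = "\<theta>((j, ?q) := t)"
    have H: "H4 ?t j k s = H4 \<theta> j k s" using jk by (intro H4_upd) auto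
    have Q: "Q4 ?t k k = Q4 \<theta> k k" using jk by (intro Q4_upd) auto
    have Q': "Q4 ?t j k = Q4 \<theta> j k" using jk by (intro Q4_upd) auto
    have pr: "(\<Prod>m\<in>{1..s-1}. sin (?t (j, 4*(k-1)+m))) = (\<Prod>m\<in>{1..s-1}. sin (\<theta> (j, 4*(k-1)+m)))"
      by (rule prod.cong) auto
    have l: "lq ?t j k s = cos t * (\<Prod>m\<in>{1..s-1}. sin (\<theta> (j, 4*(k-1)+m))) * Q4 \<theta> j k"
      unfolding lq_alt Q' pr by simp
    show ?thesis unfolding map4_expand[OF jk(3) jk(4) jk(2) jk(5) jk(6)] H Q l K_def by (simp add: mult_ac)
  qed
  have D: "((\<lambda>t. map4 N (\<theta>((j, ?q) := t)) (j, k, s)) has_real_derivative (- sin (\<theta> (j, ?q)) * K)) (at (\<theta> (j, ?q)))"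
    unfolding f by (auto intro!: derivative_eq_intros)
  have "partial_deriv (\<lambda>y. map4 N y (j, k, s)) \<theta> (j, ?q) = - sin (\<theta> (j, ?q)) * K"
    using pd_eq[OF D] .
  also have "\<dots> = - ((\<Prod>p\<in>{1..<?q+1}. sin (\<theta> (j, p))) * (\<Prod>p\<in>{1..<4*(k-1)+1}. sin (\<theta> (k, p))))"
  proof -
    have e1: "{1..s-1} = {1..<s}" using jk by auto
    have e2: "(\<Prod>m\<in>{1..<s+1}. sin (\<theta> (j, 4*(k-1)+m))) = (\<Prod>m\<in>{1..<s}. sin (\<theta> (j, 4*(k-1)+m))) * sin (\<theta> (j, ?q))"
      using jk by (simp add: prod.atLeastLessThan_Suc)
    show ?thesis unfolding K_def Qk Qj prod_split_shift[where a="4*(k-1)" and s=s] e1 e2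
      by (simp add: mult_ac)
  qed
  finally show ?thesis .
qed

lemma case4:
  assumes N: "N \<ge> 2"
    and pos: "\<forall>j p. 2 \<le> j \<and> j \<le> N \<and> 1 \<le> p \<and> p \<le> 4*j-4 \<longrightarrow> 0 < \<theta> (j, p) \<and> \<theta> (j, p) < pi"
  shows "\<bar>jacobian_det (angles4 N) (coords4 N) (map4 N) \<theta>\<bar> =
              (\<Prod>j\<in>{2..N}. \<Prod>p\<in>{1..4*j-4}. sin (\<theta> (j, p)) ^ (4*N-p-3))"
proof -
  have "\<bar>jacobian_det (angles4 N) (coords4 N) (map4 N) \<theta>\<bar>
     = (\<Prod>j\<in>{2..<Suc N}. \<Prod>p\<in>{1..<4*(j-1)+1}. sin (\<theta> (j, p)) ^ (4*(N-1)+1-p))"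
    unfolding angles4_eq coords4_eq
  proof (rule assemble)
    fix j k c :: nat and i assume "(j, k, c) \<in> set (coB 4 N)" "i \<in> set (angB (\<lambda>j. 4*(j-1)) N)" "lexlt (j, 4*(k-1)+c) i"
    then show "partial_deriv (\<lambda>y. map4 N y (j, k, c)) \<theta> i = 0" by (rule zero4)
  next
    fix j k c :: nat assume "2 \<le> j" "j \<le> N" "1 \<le> k" "k < j" "1 \<le> c" "c \<le> 4"
    then show "partial_deriv (\<lambda>y. map4 N y (j, k, c)) \<theta> (j, 4*(k-1)+c) =
        - ((\<Prod>p\<in>{1..<4*(k-1)+c+1}. sin (\<theta> (j, p))) * (\<Prod>p\<in>{1..<4*(k-1)+1}. sin (\<theta> (k, p))))"
      by (rule diag4)
  next
    fix j p assume "2 \<le> j" "j \<le> N" "1 \<le> p" "p \<le> 4*(j-1)"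
    then show "0 < sin (\<theta> (j, p))" using pos by (intro sin_gt_zero) auto
  qed
  also have "\<dots> = (\<Prod>j\<in>{2..N}. \<Prod>p\<in>{1..4*j-4}. sin (\<theta> (j, p)) ^ (4*N-p-3))"
  proof (rule prod.cong)
    show "{2..<Suc N} = {2..N}" by auto
  next
    fix j assume j: "j \<in> {2..N}"
    show "(\<Prod>p\<in>{1..<4*(j-1)+1}. sin (\<theta> (j, p)) ^ (4*(N-1)+1-p)) = (\<Prod>p\<in>{1..4*j-4}. sin (\<theta> (j, p)) ^ (4*N-p-3))"
    proof (rule prod.cong)
      show "{1..<4*(j-1)+1} = {1..4*j-4}" using j by auto
    next
      fix p assume "p \<in> {1..4*j-4}"
      then have "4*(N-1)+1-p = 4*N-p-3" using j N by auto
      then show "sin (\<theta> (j, p)) ^ (4*(N-1)+1-p) = sin (\<theta> (j, p)) ^ (4*N-p-3)" by simp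
    qed
  qed
  finally show ?thesis .
qed


theorem mainTheorem4:
  fixes N :: nat
  assumes "N \<ge> 2"
  shows "(\<forall>\<theta> :: nat \<times> nat \<Rightarrow> real.
            (\<forall>j p. 2 \<le> j \<and> j \<le> N \<and> 1 \<le> p \<and> p \<le> 2*j-2 \<longrightarrow> 0 < \<theta> (j, p) \<and> \<theta> (j, p) < pi) \<longrightarrow>
            \<bar>jacobian_det (angles2 N) (coords2 N) (map2 N) \<theta>\<bar> =
              (\<Prod>j\<in>{2..N}. \<Prod>p\<in>{1..2*j-2}. sin (\<theta> (j, p)) ^ (2*N-p-1)))
       \<and> (\<forall>\<theta> :: nat \<times> nat \<Rightarrow> real.
            (\<forall>j p. 2 \<le> j \<and> j \<le> N \<and> 1 \<le> p \<and> p \<le> 4*j-4 \<longrightarrow> 0 < \<theta> (j, p) \<and> \<theta> (j, p) < pi) \<longrightarrow>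
            \<bar>jacobian_det (angles4 N) (coords4 N) (map4 N) \<theta>\<bar> =
              (\<Prod>j\<in>{2..N}. \<Prod>p\<in>{1..4*j-4}. sin (\<theta> (j, p)) ^ (4*N-p-3)))"
  using case2[OF assms] case4[OF assms] by blast

end
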